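(* Let $\theta,\eta\in(0,\tfrac{\pi}{4}]$, and let the four qubits $A,C_1,C_2,B$ be in the state $|\Phi_\theta\rangle_{AC_1}\otimes|\Phi_\eta\rangle_{C_2B}$. Let $|\varphi\rangle\in\mathbb{C}^2\otimes\mathbb{C}^2$ be a unit vector on Clare's system $C_1C_2$ such that, conditioned on Clare's system being projected onto $|\varphi\rangle$, the resulting (normalized) state of Alice and Bob's qubits $AB$ is a maximally entangled two-qubit state, i.e. of the form $(U\otimes I)\tfrac{1}{\sqrt2}(|00\rangle+|11\rangle)$ for some $2\times2$ unitary $U$. Then the probability $p(\varphi)$ of this projection outcome satisfies $$\frac{\sin^2 2\theta\,\sin^2 2\eta}{4(1+\cos2\theta\cos2\eta)}\le p(\varphi)\le \frac{\sin^2 2\theta\,\sin^2 2\eta}{4(1-\cos2\theta\cos2\eta)}.$$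
   Context: For $\lambda\in[0,\tfrac{\pi}{2}]$, $|\Phi_\lambda\rangle=\cos\lambda|00\rangle+\sin\lambda|11\rangle$. Alice holds qubit $A$, Clare holds qubits $C_1$ (entangled initially with $A$) and $C_2$ (entangled initially with $B$), Bob holds qubit $B$. The probability of projecting Clare's system onto $|\varphi\rangle$ is $p(\varphi)=\|(\langle\varphi|_{C_1C_2}\otimes I_{AB})|\Phi_\theta\rangle_{AC_1}|\Phi_\eta\rangle_{C_2B}\|^2$. *)

theory Defs
  imports Complex_Main
begin

(* Qubit computational basis indices are the naturals 0 and 1; a vector in C^2 (x) C^2
   is represented by its coefficient function on indices i,j < 2. *)

definition Phi :: "real \<Rightarrow> nat \<Rightarrow> nat \<Rightarrow> complex" where
  "Phi l i j = (if i = j then (if i = 0 then complex_of_real (cos l) else complex_of_real (sin l)) else 0)"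

definition state4 :: "real \<Rightarrow> real \<Rightarrow> nat \<Rightarrow> nat \<Rightarrow> nat \<Rightarrow> nat \<Rightarrow> complex" where
  "state4 th et a c1 c2 b = Phi th a c1 * Phi et c2 b"

text \<open>Unnormalized post-measurement AB state (<phi|_{C1C2} (x) I_AB) |state>, coefficient of |a b>.\<close>
definition post_AB :: "real \<Rightarrow> real \<Rightarrow> (nat \<Rightarrow> nat \<Rightarrow> complex) \<Rightarrow> nat \<Rightarrow> nat \<Rightarrow> complex" where
  "post_AB th et \<phi> a b = (\<Sum>c1<2. \<Sum>c2<2. cnj (\<phi> c1 c2) * state4 th et a c1 c2 b)"

definition prob :: "real \<Rightarrow> real \<Rightarrow> (nat \<Rightarrow> nat \<Rightarrow> complex) \<Rightarrow> real" where
  "prob th et \<phi> = (\<Sum>a<2. \<Sum>b<2. (cmod (post_AB th et \<phi> a b))\<^sup>2)"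

definition unit_vec2 :: "(nat \<Rightarrow> nat \<Rightarrow> complex) \<Rightarrow> bool" where
  "unit_vec2 \<phi> \<longleftrightarrow> (\<Sum>i<2. \<Sum>j<2. (cmod (\<phi> i j))\<^sup>2) = 1"

definition unitary2 :: "(nat \<Rightarrow> nat \<Rightarrow> complex) \<Rightarrow> bool" where
  "unitary2 U \<longleftrightarrow> (\<forall>i<2. \<forall>k<2. (\<Sum>j<2. U i j * cnj (U k j)) = (if i = k then 1 else 0))"

text \<open>Conditioned on outcome phi (which must have positive probability), the normalized
  AB state equals (U (x) I) (|00> + |11>)/sqrt 2 for some unitary U; the coefficient of
  |a b> of the latter is U a b / sqrt 2.\<close>
definition max_ent_outcome :: "real \<Rightarrow> real \<Rightarrow> (nat \<Rightarrow> nat \<Rightarrow> complex) \<Rightarrow> bool" where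
  "max_ent_outcome th et \<phi> \<longleftrightarrow> prob th et \<phi> > 0 \<and>
     (\<exists>U. unitary2 U \<and> (\<forall>a<2. \<forall>b<2.
        post_AB th et \<phi> a b / complex_of_real (sqrt (prob th et \<phi>)) = U a b / complex_of_real (sqrt 2)))"

end

theory Submission
  imports Defs
begin

lemma post_eq:
  "post_AB th et \<phi> 0 0 = cnj (\<phi> 0 0) * complex_of_real (cos th * cos et)"
  "post_AB th et \<phi> 0 1 = cnj (\<phi> 0 1) * complex_of_real (cos th * sin et)"
  "post_AB th et \<phi> 1 0 = cnj (\<phi> 1 0) * complex_of_real (sin th * cos et)"
  "post_AB th et \<phi> 1 1 = cnj (\<phi> 1 1) * complex_of_real (sin th * sin et)"
  by (simp_all add: post_AB_def state4_def Phi_def numeral_2_eq_2 lessThan_Suc)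

lemma cm_post:
  "(cmod (post_AB th et \<phi> 0 0))\<^sup>2 = (cmod (\<phi> 0 0))\<^sup>2 * ((cos th)\<^sup>2 * (cos et)\<^sup>2)"
  "(cmod (post_AB th et \<phi> 0 1))\<^sup>2 = (cmod (\<phi> 0 1))\<^sup>2 * ((cos th)\<^sup>2 * (sin et)\<^sup>2)"
  "(cmod (post_AB th et \<phi> 1 0))\<^sup>2 = (cmod (\<phi> 1 0))\<^sup>2 * ((sin th)\<^sup>2 * (cos et)\<^sup>2)"
  "(cmod (post_AB th et \<phi> 1 1))\<^sup>2 = (cmod (\<phi> 1 1))\<^sup>2 * ((sin th)\<^sup>2 * (sin et)\<^sup>2)"
  by (simp_all only: post_eq norm_mult complex_mod_cnj norm_of_real power_mult_distrib abs_mult power2_abs)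

lemma unit_rows:
  assumes "unitary2 U"
  shows "U 0 0 * cnj (U 0 0) + U 0 1 * cnj (U 0 1) = 1"
    "U 1 0 * cnj (U 1 0) + U 1 1 * cnj (U 1 1) = 1"
    "U 0 0 * cnj (U 1 0) + U 0 1 * cnj (U 1 1) = 0"
  using assms unfolding unitary2_def
  by (auto simp: numeral_2_eq_2 lessThan_Suc add.commute dest!: spec[of _ 0] spec[of _ 1])

lemma cm2: "complex_of_real ((cmod z)\<^sup>2) = z * cnj z"
  by (metis complex_norm_square of_real_power)

lemma unit_abs:
  assumes "unitary2 U"
  shows "(cmod (U 0 0))\<^sup>2 + (cmod (U 0 1))\<^sup>2 = 1"
    "(cmod (U 1 0))\<^sup>2 + (cmod (U 1 1))\<^sup>2 = 1"
    "(cmod (U 0 0))\<^sup>2 * (cmod (U 1 0))\<^sup>2 = (cmod (U 0 1))\<^sup>2 * (cmod (U 1 1))\<^sup>2"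
proof -
  note r = unit_rows[OF assms]
  have "complex_of_real ((cmod (U 0 0))\<^sup>2 + (cmod (U 0 1))\<^sup>2) = 1"
    using r(1) by (simp only: of_real_add cm2)
  then show "(cmod (U 0 0))\<^sup>2 + (cmod (U 0 1))\<^sup>2 = 1"
    by (metis of_real_eq_1_iff)
  have "complex_of_real ((cmod (U 1 0))\<^sup>2 + (cmod (U 1 1))\<^sup>2) = 1"
    using r(2) by (simp only: of_real_add cm2)
  then show "(cmod (U 1 0))\<^sup>2 + (cmod (U 1 1))\<^sup>2 = 1"
    by (metis of_real_eq_1_iff)
  have "U 0 0 * cnj (U 1 0) = - (U 0 1 * cnj (U 1 1))"
    using r(3) by (simp add: eq_neg_iff_add_eq_0)
  then have "cmod (U 0 0 * cnj (U 1 0)) = cmod (U 0 1 * cnj (U 1 1))" by simp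
  then have "cmod (U 0 0) * cmod (U 1 0) = cmod (U 0 1) * cmod (U 1 1)"
    by (simp add: norm_mult)
  then show "(cmod (U 0 0))\<^sup>2 * (cmod (U 1 0))\<^sup>2 = (cmod (U 0 1))\<^sup>2 * (cmod (U 1 1))\<^sup>2"
    by (metis power_mult_distrib)
qed

lemma core:
  fixes C S D T p x :: real
  assumes "C > 0" "S > 0" "D > 0" "T > 0" "C\<^sup>2 + S\<^sup>2 = 1" "D\<^sup>2 + T\<^sup>2 = 1"
    "C\<^sup>2 - S\<^sup>2 \<ge> 0" "D\<^sup>2 - T\<^sup>2 \<ge> 0" "p > 0" "0 \<le> x" "x \<le> 1"
    "p/2 * (x * (C\<^sup>2*D\<^sup>2 + S\<^sup>2*T\<^sup>2) + (1-x) * (C\<^sup>2*T\<^sup>2 + S\<^sup>2*D\<^sup>2)) = C\<^sup>2*S\<^sup>2*D\<^sup>2*T\<^sup>2"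
  shows "(2*S*C)\<^sup>2 * (2*T*D)\<^sup>2 / (4 * (1 + (C\<^sup>2 - S\<^sup>2) * (D\<^sup>2 - T\<^sup>2))) \<le> p
       \<and> p \<le> (2*S*C)\<^sup>2 * (2*T*D)\<^sup>2 / (4 * (1 - (C\<^sup>2 - S\<^sup>2) * (D\<^sup>2 - T\<^sup>2)))"
proof -
  define \<alpha> where "\<alpha> = C\<^sup>2*D\<^sup>2 + S\<^sup>2*T\<^sup>2"
  define \<beta> where "\<beta> = C\<^sup>2*T\<^sup>2 + S\<^sup>2*D\<^sup>2"
  define K where "K = C\<^sup>2*S\<^sup>2*D\<^sup>2*T\<^sup>2"
  have one: "1 = (C\<^sup>2 + S\<^sup>2) * (D\<^sup>2 + T\<^sup>2)" using assms by simp
  have ha: "1 + (C\<^sup>2 - S\<^sup>2) * (D\<^sup>2 - T\<^sup>2) = 2*\<alpha>"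
    unfolding \<alpha>_def by (subst one) (simp add: algebra_simps)
  have hb: "1 - (C\<^sup>2 - S\<^sup>2) * (D\<^sup>2 - T\<^sup>2) = 2*\<beta>"
    unfolding \<beta>_def by (subst one) (simp add: algebra_simps)
  have num: "(2*S*C)\<^sup>2 * (2*T*D)\<^sup>2 = 16 * K" unfolding K_def by (simp add: algebra_simps power2_eq_square)
  have bpos: "\<beta> > 0" unfolding \<beta>_def using assms by (simp add: add_pos_pos)
  have ab: "\<alpha> - \<beta> = (C\<^sup>2 - S\<^sup>2) * (D\<^sup>2 - T\<^sup>2)" unfolding \<alpha>_def \<beta>_def by (simp add: algebra_simps)
  have "(C\<^sup>2 - S\<^sup>2) * (D\<^sup>2 - T\<^sup>2) \<ge> 0" using assms(7,8) by (rule mult_nonneg_nonneg)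
  then have ab2: "\<alpha> \<ge> \<beta>" using ab by linarith
  have eq: "p * (x*\<alpha> + (1-x)*\<beta>) = 2*K" using assms(12) unfolding \<alpha>_def \<beta>_def K_def by simp
  have "x*\<alpha> + (1-x)*\<beta> \<le> \<alpha>"
  proof -
    have "(1-x)*\<beta> \<le> (1-x)*\<alpha>" using ab2 assms(11) by (simp add: mult_left_mono)
    then show ?thesis by (simp add: algebra_simps diff_divide_distrib add_divide_distrib)
  qed
  then have l: "2*K \<le> p*\<alpha>" using eq assms(9) by (metis mult_left_mono less_imp_le)
  have "\<beta> \<le> x*\<alpha> + (1-x)*\<beta>"
  proof -
    have "x*\<beta> \<le> x*\<alpha>" using ab2 assms(10) by (simp add: mult_left_mono)
    then show ?thesis by (simp add: algebra_simps diff_divide_distrib add_divide_distrib)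
  qed
  then have u: "p*\<beta> \<le> 2*K" using eq assms(9) by (metis mult_left_mono less_imp_le)
  have apos: "\<alpha> > 0" using bpos ab2 by linarith
  show ?thesis unfolding ha hb num
    using l u apos bpos by (simp add: divide_simps mult.commute)
qed

theorem lemma3:
  fixes \<theta> \<eta> :: real and \<phi> :: "nat \<Rightarrow> nat \<Rightarrow> complex"
  assumes "0 < \<theta>" "\<theta> \<le> pi / 4" "0 < \<eta>" "\<eta> \<le> pi / 4"
    and "unit_vec2 \<phi>"
    and "max_ent_outcome \<theta> \<eta> \<phi>"
  shows "(sin (2*\<theta>))\<^sup>2 * (sin (2*\<eta>))\<^sup>2 / (4 * (1 + cos (2*\<theta>) * cos (2*\<eta>))) \<le> prob \<theta> \<eta> \<phi>
       \<and> prob \<theta> \<eta> \<phi> \<le> (sin (2*\<theta>))\<^sup>2 * (sin (2*\<eta>))\<^sup>2 / (4 * (1 - cos (2*\<theta>) * cos (2*\<eta>)))"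
proof -
  define p where "p = prob \<theta> \<eta> \<phi>"
  have pp: "p > 0" and "\<exists>U. unitary2 U \<and> (\<forall>a<2. \<forall>b<2.
        post_AB \<theta> \<eta> \<phi> a b / complex_of_real (sqrt p) = U a b / complex_of_real (sqrt 2))"
    using assms(6) unfolding max_ent_outcome_def p_def by auto
  then obtain U where U: "unitary2 U" and UU: "\<And>a b. a < 2 \<Longrightarrow> b < 2 \<Longrightarrow>
        post_AB \<theta> \<eta> \<phi> a b / complex_of_real (sqrt p) = U a b / complex_of_real (sqrt 2)" by blast
  have pm: "(cmod (post_AB \<theta> \<eta> \<phi> a b))\<^sup>2 = p/2 * (cmod (U a b))\<^sup>2" if "a < 2" "b < 2" for a b
  proof -
    have sp: "sqrt p > 0" using pp by simp
    have "post_AB \<theta> \<eta> \<phi> a b = complex_of_real (sqrt p / sqrt 2) * U a b"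
      using UU[OF that] sp by (simp add: field_simps)
    then have "cmod (post_AB \<theta> \<eta> \<phi> a b) = sqrt p / sqrt 2 * cmod (U a b)"
      using sp by (simp add: norm_mult norm_divide)
    then show ?thesis using pp by (simp add: power_mult_distrib power_divide)
  qed
  note ua = unit_abs[OF U]
  define x where "x = (cmod (U 0 0))\<^sup>2"
  have u01: "(cmod (U 0 1))\<^sup>2 = 1 - x" using ua(1) x_def by simp
  have u10: "(cmod (U 1 0))\<^sup>2 = 1 - x" and u11: "(cmod (U 1 1))\<^sup>2 = x"
  proof -
    have "x * (cmod (U 1 0))\<^sup>2 = (1-x) * (1 - (cmod (U 1 0))\<^sup>2)"
    proof -
      have d: "(cmod (U 1 1))\<^sup>2 = 1 - (cmod (U 1 0))\<^sup>2" using ua(2) by simp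
      show ?thesis using ua(3) unfolding d u01 x_def[symmetric] .
    qed
    then have "(cmod (U 1 0))\<^sup>2 = 1 - x" by (simp add: algebra_simps)
    then show "(cmod (U 1 0))\<^sup>2 = 1 - x" "(cmod (U 1 1))\<^sup>2 = x" using ua(2) by simp_all
  qed
  have x01: "0 \<le> x" "x \<le> 1" using x_def u01 by simp_all (metis diff_ge_0_iff_ge zero_le_power2)
  define C where "C = cos \<theta>"
  define S where "S = sin \<theta>"
  define D where "D = cos \<eta>"
  define T where "T = sin \<eta>"
  have th2: "2*\<theta> \<le> pi/2" "2*\<eta> \<le> pi/2" using assms by simp_all
  have Spos: "S > 0" unfolding S_def using assms pi_gt_zero by (intro sin_gt_zero; linarith)
  have Tpos: "T > 0" unfolding T_def using assms pi_gt_zero by (intro sin_gt_zero; linarith)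
  have Cpos: "C > 0" unfolding C_def using assms pi_gt_zero by (intro cos_gt_zero; linarith)
  have Dpos: "D > 0" unfolding D_def using assms pi_gt_zero by (intro cos_gt_zero; linarith)
  have c2t: "cos (2*\<theta>) \<ge> 0" using assms th2 by (intro cos_ge_zero) auto
  have c2e: "cos (2*\<eta>) \<ge> 0" using assms th2 by (intro cos_ge_zero) auto
  have c2t': "cos (2*\<theta>) = C\<^sup>2 - S\<^sup>2" unfolding C_def S_def by (rule cos_double)
  have c2e': "cos (2*\<eta>) = D\<^sup>2 - T\<^sup>2" unfolding D_def T_def by (rule cos_double)
  have s2t: "sin (2*\<theta>) = 2*S*C" unfolding C_def S_def by (rule sin_double)
  have s2e: "sin (2*\<eta>) = 2*T*D" unfolding D_def T_def by (rule sin_double)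
  have pyt: "C\<^sup>2 + S\<^sup>2 = 1" "D\<^sup>2 + T\<^sup>2 = 1" unfolding C_def S_def D_def T_def by simp_all
  have uv: "(cmod (\<phi> 0 0))\<^sup>2 + (cmod (\<phi> 0 1))\<^sup>2 + (cmod (\<phi> 1 0))\<^sup>2 + (cmod (\<phi> 1 1))\<^sup>2 = 1"
    using assms(5) unfolding unit_vec2_def by (simp add: numeral_2_eq_2 lessThan_Suc add.assoc)
  have f00: "(cmod (\<phi> 0 0))\<^sup>2 * (C\<^sup>2 * D\<^sup>2) = p/2 * x"
    using pm[of 0 0] cm_post(1)[of \<theta> \<eta> \<phi>] x_def C_def D_def by simp
  have f01: "(cmod (\<phi> 0 1))\<^sup>2 * (C\<^sup>2 * T\<^sup>2) = p/2 * (1-x)"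
    using pm[of 0 1] cm_post(2)[of \<theta> \<eta> \<phi>] u01 C_def T_def by simp
  have f10: "(cmod (\<phi> 1 0))\<^sup>2 * (S\<^sup>2 * D\<^sup>2) = p/2 * (1-x)"
    using pm[of 1 0] cm_post(3)[of \<theta> \<eta> \<phi>] u10 S_def D_def by simp
  have f11: "(cmod (\<phi> 1 1))\<^sup>2 * (S\<^sup>2 * T\<^sup>2) = p/2 * x"
    using pm[of 1 1] cm_post(4)[of \<theta> \<eta> \<phi>] u11 S_def T_def by simp
  have key: "p/2 * (x * (C\<^sup>2*D\<^sup>2 + S\<^sup>2*T\<^sup>2) + (1-x) * (C\<^sup>2*T\<^sup>2 + S\<^sup>2*D\<^sup>2)) = C\<^sup>2*S\<^sup>2*D\<^sup>2*T\<^sup>2"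
  proof -
    have e1: "(cmod (\<phi> 0 0))\<^sup>2 = p/2*x / (C\<^sup>2 * D\<^sup>2)" using f00 Cpos Dpos by (simp add: field_simps)
    have e2: "(cmod (\<phi> 0 1))\<^sup>2 = p/2*(1-x) / (C\<^sup>2 * T\<^sup>2)" using f01 Cpos Tpos by (simp add: field_simps)
    have e3: "(cmod (\<phi> 1 0))\<^sup>2 = p/2*(1-x) / (S\<^sup>2 * D\<^sup>2)" using f10 Spos Dpos by (simp add: field_simps)
    have e4: "(cmod (\<phi> 1 1))\<^sup>2 = p/2*x / (S\<^sup>2 * T\<^sup>2)" using f11 Spos Tpos by (simp add: field_simps)
    have "p/2*x / (C\<^sup>2 * D\<^sup>2) + p/2*(1-x) / (C\<^sup>2 * T\<^sup>2) + p/2*(1-x) / (S\<^sup>2 * D\<^sup>2) + p/2*x / (S\<^sup>2 * T\<^sup>2) = 1"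
      using uv unfolding e1 e2 e3 e4 .
    then have "C\<^sup>2*S\<^sup>2*D\<^sup>2*T\<^sup>2 * (p/2*x / (C\<^sup>2 * D\<^sup>2) + p/2*(1-x) / (C\<^sup>2 * T\<^sup>2) + p/2*(1-x) / (S\<^sup>2 * D\<^sup>2) + p/2*x / (S\<^sup>2 * T\<^sup>2)) = C\<^sup>2*S\<^sup>2*D\<^sup>2*T\<^sup>2" by simp
    moreover have "C\<^sup>2*S\<^sup>2*D\<^sup>2*T\<^sup>2 * (p/2*x / (C\<^sup>2 * D\<^sup>2) + p/2*(1-x) / (C\<^sup>2 * T\<^sup>2) + p/2*(1-x) / (S\<^sup>2 * D\<^sup>2) + p/2*x / (S\<^sup>2 * T\<^sup>2))
      = p/2*x*(S\<^sup>2*T\<^sup>2) + p/2*(1-x)*(S\<^sup>2*D\<^sup>2) + p/2*(1-x)*(C\<^sup>2*T\<^sup>2) + p/2*x*(C\<^sup>2*D\<^sup>2)"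
      using Cpos Spos Dpos Tpos by (simp add: distrib_left mult_ac)
    ultimately have "p/2*x*(S\<^sup>2*T\<^sup>2) + p/2*(1-x)*(S\<^sup>2*D\<^sup>2) + p/2*(1-x)*(C\<^sup>2*T\<^sup>2) + p/2*x*(C\<^sup>2*D\<^sup>2) = C\<^sup>2*S\<^sup>2*D\<^sup>2*T\<^sup>2" by metis
    then show ?thesis by (simp add: algebra_simps diff_divide_distrib add_divide_distrib)
  qed
  have "(2*S*C)\<^sup>2 * (2*T*D)\<^sup>2 / (4 * (1 + (C\<^sup>2 - S\<^sup>2) * (D\<^sup>2 - T\<^sup>2))) \<le> p
       \<and> p \<le> (2*S*C)\<^sup>2 * (2*T*D)\<^sup>2 / (4 * (1 - (C\<^sup>2 - S\<^sup>2) * (D\<^sup>2 - T\<^sup>2)))"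
    using core[OF Cpos Spos Dpos Tpos pyt _ _ pp x01 key] c2t c2e c2t' c2e' by simp
  then show ?thesis unfolding p_def s2t s2e c2t' c2e' .
qed

end
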